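(* Let $Br_n^+\subseteq SB_n^+$ denote the submonoid generated by $\sigma_1,\dots,\sigma_{n-1}$. For every element $w\in SB_n^+$ there exists a unique greatest left divisor of $w$ belonging to $Br_n^+$: that is, there is a unique $d\in Br_n^+$ with $w=du$ for some $u\in SB_n^+$ such that every $a\in Br_n^+$ with $w=av$ for some $v\in SB_n^+$ satisfies $d=ab$ for some $b\in SB_n^+$. The analogous statement holds for right divisors.
   Context: Fix $n\ge 2$. The positive singular braid monoid $SB_n^+$ is the monoid with generators $\sigma_1,\dots,\sigma_{n-1},x_1,\dots,x_{n-1}$ and relations: $\sigma_i\sigma_j=\sigma_j\sigma_i$ and $x_ix_j=x_jx_i$ if $|i-j|>1$; $x_i\sigma_j=\sigma_jx_i$ if $|i-j|\ne 1$; $\sigma_i\sigma_{i+1}\sigma_i=\sigma_{i+1}\sigma_i\sigma_{i+1}$; $\sigma_i\sigma_{i+1}x_i=x_{i+1}\sigma_i\sigma_{i+1}$; $\sigma_{i+1}\sigma_ix_{i+1}=x_i\sigma_{i+1}\sigma_i$. *)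

theory Defs
  imports Main
begin

text \<open>Generators of the positive singular braid monoid: Sg i = sigma_i, Xg i = x_i.\<close>
datatype gen = Sg nat | Xg nat

definition valid :: "nat \<Rightarrow> gen list \<Rightarrow> bool" where
  "valid n w \<longleftrightarrow> (\<forall>g\<in>set w. case g of Sg i \<Rightarrow> 1 \<le> i \<and> i < n | Xg i \<Rightarrow> 1 \<le> i \<and> i < n)"

text \<open>Words using only the sigma generators (representatives of elements of Br_n^+).\<close>
definition braid_word :: "gen list \<Rightarrow> bool" where
  "braid_word w \<longleftrightarrow> (\<forall>g\<in>set w. \<exists>i. g = Sg i)"

definition rels :: "nat \<Rightarrow> (gen list \<times> gen list) set" where
  "rels n =
     {([Sg i, Sg j], [Sg j, Sg i]) | i j. 1 \<le> i \<and> i < n \<and> 1 \<le> j \<and> j < n \<and> (i + 1 < j \<or> j + 1 < i)}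
   \<union> {([Xg i, Xg j], [Xg j, Xg i]) | i j. 1 \<le> i \<and> i < n \<and> 1 \<le> j \<and> j < n \<and> (i + 1 < j \<or> j + 1 < i)}
   \<union> {([Xg i, Sg j], [Sg j, Xg i]) | i j. 1 \<le> i \<and> i < n \<and> 1 \<le> j \<and> j < n \<and> j \<noteq> i + 1 \<and> i \<noteq> j + 1}
   \<union> {([Sg i, Sg (i+1), Sg i], [Sg (i+1), Sg i, Sg (i+1)]) | i. 1 \<le> i \<and> i + 1 < n}
   \<union> {([Sg i, Sg (i+1), Xg i], [Xg (i+1), Sg i, Sg (i+1)]) | i. 1 \<le> i \<and> i + 1 < n}
   \<union> {([Sg (i+1), Sg i, Xg (i+1)], [Xg i, Sg (i+1), Sg i]) | i. 1 \<le> i \<and> i + 1 < n}"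

text \<open>The monoid congruence on words generated by the relations: two words are equal
  in SB_n^+ iff they are related by sbeq n.\<close>
inductive sbeq :: "nat \<Rightarrow> gen list \<Rightarrow> gen list \<Rightarrow> bool" for n where
  refl: "sbeq n w w"
| sym: "sbeq n u v \<Longrightarrow> sbeq n v u"
| trans: "sbeq n u v \<Longrightarrow> sbeq n v w \<Longrightarrow> sbeq n u w"
| step: "(l, r) \<in> rels n \<Longrightarrow> sbeq n (u @ l @ v) (u @ r @ v)"

definition greatest_left_braid_divisor :: "nat \<Rightarrow> gen list \<Rightarrow> gen list \<Rightarrow> bool" where
  "greatest_left_braid_divisor n w d \<longleftrightarrow>
     valid n d \<and> braid_word d \<and> (\<exists>u. valid n u \<and> sbeq n w (d @ u)) \<and>
     (\<forall>a v. valid n a \<and> braid_word a \<and> valid n v \<and> sbeq n w (a @ v)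
        \<longrightarrow> (\<exists>b. valid n b \<and> sbeq n d (a @ b)))"

definition greatest_right_braid_divisor :: "nat \<Rightarrow> gen list \<Rightarrow> gen list \<Rightarrow> bool" where
  "greatest_right_braid_divisor n w d \<longleftrightarrow>
     valid n d \<and> braid_word d \<and> (\<exists>u. valid n u \<and> sbeq n w (u @ d)) \<and>
     (\<forall>a v. valid n a \<and> braid_word a \<and> valid n v \<and> sbeq n w (v @ a)
        \<longrightarrow> (\<exists>b. valid n b \<and> sbeq n d (b @ a)))"

end

theory Submission imports Defs begin

datatype res = Res "gen list" "gen list" | Clash | Out

fun validg :: "nat \<Rightarrow> gen \<Rightarrow> bool" where
  "validg n (Sg i) = (1 \<le> i \<and> i < n)"
| "validg n (Xg i) = (1 \<le> i \<and> i < n)"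

fun cmp0 :: "gen \<Rightarrow> gen \<Rightarrow> (gen list \<times> gen list) option" where
  "cmp0 (Sg i) (Sg j) = (if i + 1 < j \<or> j + 1 < i then Some ([Sg j], [Sg i])
      else if j = i + 1 \<or> i = j + 1 then Some ([Sg j, Sg i], [Sg i, Sg j]) else None)"
| "cmp0 (Xg i) (Xg j) = (if i + 1 < j \<or> j + 1 < i then Some ([Xg j], [Xg i]) else None)"
| "cmp0 (Sg i) (Xg j) = (if j = i + 1 then Some ([Sg (i+1), Xg i], [Sg i, Sg (i+1)])
      else if i = j + 1 then Some ([Sg j, Xg i], [Sg i, Sg j]) else Some ([Xg j], [Sg i]))"
| "cmp0 (Xg j) (Sg i) = (if j = i + 1 then Some ([Sg i, Sg (i+1)], [Sg (i+1), Xg i])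
      else if i = j + 1 then Some ([Sg i, Sg j], [Sg j, Xg i]) else Some ([Sg i], [Xg j]))"

definition cmp :: "nat \<Rightarrow> gen \<Rightarrow> gen \<Rightarrow> (gen list \<times> gen list) option" where
  "cmp n s t = (if s = t then Some ([], []) else if validg n s \<and> validg n t then cmp0 s t else None)"

fun rv :: "nat \<Rightarrow> nat \<Rightarrow> gen list \<Rightarrow> gen list \<Rightarrow> res" where
  "rv n k [] b = Res b []"
| "rv n k (x#a) [] = Res [] (x#a)"
| "rv n 0 (x#a) (y#b) = Out"
| "rv n (Suc k) (x#a) (y#b) = (case cmp n x y of None \<Rightarrow> Clash
     | Some (f, g) \<Rightarrow> (case rv n k a f of Res c1 d1 \<Rightarrow>
          (case rv n k (g @ d1) b of Res c2 d2 \<Rightarrow> Res (c1 @ c2) d2 | r \<Rightarrow> r) | r \<Rightarrow> r))"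

definition cube_ok :: "nat \<Rightarrow> gen \<Rightarrow> gen \<Rightarrow> gen \<Rightarrow> bool" where
  "cube_ok n s t r = (case (cmp n s t, cmp n t r) of
     (Some (f1, g1), Some (g2, h2)) \<Rightarrow>
       (case rv n 5 g1 g2 of Clash \<Rightarrow> True | Out \<Rightarrow> False
        | Res c d \<Rightarrow> (case cmp n s r of None \<Rightarrow> False
            | Some (f3, h3) \<Rightarrow> (case rv n 5 f3 (f1 @ c) of
                 Res e e' \<Rightarrow> e' = [] \<and> rv n 5 (h2 @ d) (h3 @ e) = Res [] []
               | _ \<Rightarrow> False)))
   | _ \<Rightarrow> True)"


lemma c5: "(i = j \<Longrightarrow> P) \<Longrightarrow> (j = i+1 \<Longrightarrow> P) \<Longrightarrow> (i = j+1 \<Longrightarrow> P) \<Longrightarrow> (i+1<j \<Longrightarrow> P) \<Longrightarrow> (j+1<(i::nat) \<Longrightarrow> P) \<Longrightarrow> P"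
  by linarith

lemma cube_SSS: "cube_ok n (Sg i) (Sg j) (Sg k)"
  apply (rule c5[of i j]; rule c5[of j k]; rule c5[of i k])
  apply (simp_all add: cube_ok_def cmp_def numeral_eq_Suc)
  done

lemma cube_SSX: "cube_ok n (Sg i) (Sg j) (Xg k)"
  apply (rule c5[of i j]; rule c5[of j k]; rule c5[of i k])
  apply (simp_all add: cube_ok_def cmp_def numeral_eq_Suc)
  done

lemma cube_SXS: "cube_ok n (Sg i) (Xg j) (Sg k)"
  apply (rule c5[of i j]; rule c5[of j k]; rule c5[of i k])
  apply (simp_all add: cube_ok_def cmp_def numeral_eq_Suc)
  done

lemma cube_SXX: "cube_ok n (Sg i) (Xg j) (Xg k)"
  apply (rule c5[of i j]; rule c5[of j k]; rule c5[of i k])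
  apply (simp_all add: cube_ok_def cmp_def numeral_eq_Suc)
  done

lemma cube_XSS: "cube_ok n (Xg i) (Sg j) (Sg k)"
  apply (rule c5[of i j]; rule c5[of j k]; rule c5[of i k])
  apply (simp_all add: cube_ok_def cmp_def numeral_eq_Suc)
  done

lemma cube_XSX: "cube_ok n (Xg i) (Sg j) (Xg k)"
  apply (rule c5[of i j]; rule c5[of j k]; rule c5[of i k])
  apply (simp_all add: cube_ok_def cmp_def numeral_eq_Suc)
  done

lemma cube_XXS: "cube_ok n (Xg i) (Xg j) (Sg k)"
  apply (rule c5[of i j]; rule c5[of j k]; rule c5[of i k])
  apply (simp_all add: cube_ok_def cmp_def numeral_eq_Suc)
  done

lemma cube_XXX: "cube_ok n (Xg i) (Xg j) (Xg k)"
  apply (rule c5[of i j]; rule c5[of j k]; rule c5[of i k])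
  apply (simp_all add: cube_ok_def cmp_def numeral_eq_Suc)
  done

lemma cube_all: "cube_ok n s t r"
  by (cases s; cases t; cases r) (simp_all add: cube_SSS cube_SSX cube_SXS cube_SXX cube_XSS cube_XSX cube_XXS cube_XXX)


lemma sbeq_length: "sbeq n u v \<Longrightarrow> length u = length v"
proof (induction rule: sbeq.induct)
  case (step l r u v)
  then show ?case by (auto simp: rels_def)
qed auto

lemma sbeq_cong: "sbeq n u v \<Longrightarrow> sbeq n (p @ u @ q) (p @ v @ q)"
proof (induction rule: sbeq.induct)
  case (refl w)
  then show ?case by (rule sbeq.refl)
next
  case (sym u v)
  show ?case by (rule sbeq.sym[OF sym.IH])
next
  case (trans u v w)
  then show ?case by (blast intro: sbeq.trans)
next
  case (step l r u v)
  have "sbeq n ((p @ u) @ l @ (v @ q)) ((p @ u) @ r @ (v @ q))" using step by (rule sbeq.step)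
  then show ?case by simp
qed

lemma sbeq_appL: "sbeq n u v \<Longrightarrow> sbeq n (p @ u) (p @ v)"
  using sbeq_cong[of n u v p "[]"] by simp

lemma sbeq_appR: "sbeq n u v \<Longrightarrow> sbeq n (u @ q) (v @ q)"
  using sbeq_cong[of n u v "[]" q] by simp

lemma sbeq_Cons: "sbeq n u v \<Longrightarrow> sbeq n (x # u) (x # v)"
  using sbeq_appL[of n u v "[x]"] by simp

lemma rels_valid: "(l, r) \<in> rels n \<Longrightarrow> valid n l \<and> valid n r"
  by (auto simp: rels_def valid_def)

lemma valid_append[simp]: "valid n (a @ b) = (valid n a \<and> valid n b)"
  by (auto simp: valid_def)

lemma sbeq_valid: "sbeq n u v \<Longrightarrow> valid n u = valid n v"
proof (induction rule: sbeq.induct)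
  case (step l r u v)
  then show ?case using rels_valid[OF step] by simp
qed auto

section \<open>Complements\<close>

lemma validg_valid: "valid n [s] = validg n s"
  by (cases s) (auto simp: valid_def)

lemma cmp0_sym: "cmp0 s t = map_option (\<lambda>(f, g). (g, f)) (cmp0 t s)"
  by (cases s; cases t) auto

lemma cmp_sym: "cmp n s t = map_option (\<lambda>(f, g). (g, f)) (cmp n t s)"
  unfolding cmp_def using cmp0_sym[of s t] by auto

lemma cmp_symD: "cmp n s t = Some (f, g) \<Longrightarrow> cmp n t s = Some (g, f)"
  using cmp_sym[of n t s] by simp

lemma cmp0_sound: "validg n s \<Longrightarrow> validg n t \<Longrightarrow> s \<noteq> t \<Longrightarrow> cmp0 s t = Some (f, g) \<Longrightarrow>
   (s # f, t # g) \<in> rels n \<or> (t # g, s # f) \<in> rels n"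
proof (cases s; cases t)
  fix i j assume *: "validg n s" "validg n t" "s \<noteq> t" "cmp0 s t = Some (f, g)" "s = Sg i" "t = Xg j"
  then show ?thesis unfolding rels_def
    by (auto split: if_splits)
next
  fix i j assume *: "validg n s" "validg n t" "s \<noteq> t" "cmp0 s t = Some (f, g)" "s = Xg i" "t = Sg j"
  then show ?thesis unfolding rels_def
    by (auto split: if_splits)
qed (auto simp: rels_def split: if_splits)

lemma cmp_sound: "cmp n s t = Some (f, g) \<Longrightarrow> sbeq n (s # f) (t # g)"
proof -
  assume h: "cmp n s t = Some (f, g)"
  show ?thesis
  proof (cases "s = t")
    case True then show ?thesis using h by (simp add: cmp_def sbeq.refl)
  next
    case False
    then have v: "validg n s" "validg n t" and c: "cmp0 s t = Some (f, g)" using h by (auto simp: cmp_def split: if_splits)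
    from cmp0_sound[OF v False c] show ?thesis
      using sbeq.step[of "s # f" "t # g" n "[]" "[]"] sbeq.step[of "t # g" "s # f" n "[]" "[]"] sbeq.sym by auto
  qed
qed

lemma rels_cmp: "(l, r) \<in> rels n \<Longrightarrow> l \<noteq> [] \<and> r \<noteq> [] \<and> cmp n (hd l) (hd r) = Some (tl l, tl r)"
  unfolding rels_def cmp_def by auto

section \<open>Reversing\<close>

lemma rv_sound: "rv n k a b = Res c d \<Longrightarrow> sbeq n (a @ c) (b @ d)"
proof (induction n k a b arbitrary: c d rule: rv.induct)
  case (1 n k b)
  then show ?case by (auto intro: sbeq.refl)
next
  case (2 n k x a)
  then show ?case by (auto intro: sbeq.refl)
next
  case (3 n x a y b)
  then show ?case by simp
next
  case (4 n k x a y b)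
  obtain f g where fg: "cmp n x y = Some (f, g)" using "4.prems" by (auto split: option.splits)
  obtain c1 d1 where r1: "rv n k a f = Res c1 d1" using "4.prems" fg by (auto split: res.splits)
  obtain c2 d2 where r2: "rv n k (g @ d1) b = Res c2 d2" using "4.prems" fg r1 by (auto split: res.splits)
  have cd: "c = c1 @ c2" "d = d2" using "4.prems" fg r1 r2 by auto
  have e1: "sbeq n (a @ c1) (f @ d1)" using "4.IH"(1)[OF fg HOL.refl r1] .
  have e2: "sbeq n (g @ d1 @ c2) (b @ d2)" using "4.IH"(2)[OF fg HOL.refl r1 r2] by simp
  have "sbeq n ((x # a) @ c1 @ c2) (x # f @ d1 @ c2)"
    using sbeq_appR[OF e1, of c2] sbeq_Cons by fastforce
  moreover have "sbeq n (x # f @ d1 @ c2) (y # g @ d1 @ c2)"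
    using sbeq_appR[OF cmp_sound[OF fg], of "d1 @ c2"] by simp
  moreover have "sbeq n (y # g @ d1 @ c2) ((y # b) @ d2)"
    using sbeq_Cons[OF e2] by simp
  ultimately show ?case using cd by (blast intro: sbeq.trans)
qed


lemma cube_use:
  assumes "cmp n s t = Some (f1, g1)" "cmp n t r = Some (g2, h2)"
  shows "rv n 5 g1 g2 \<noteq> Out"
    and "rv n 5 g1 g2 = Res c d \<Longrightarrow> \<exists>f3 h3 e. cmp n s r = Some (f3, h3) \<and> sbeq n (f1 @ c) (f3 @ e) \<and> sbeq n (h2 @ d) (h3 @ e)"
proof -
  have ok: "cube_ok n s t r" by (rule cube_all)
  then show "rv n 5 g1 g2 \<noteq> Out" using assms by (auto simp: cube_ok_def)
  assume rd: "rv n 5 g1 g2 = Res c d"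
  have ok2: "case cmp n s r of None \<Rightarrow> False | Some (f3, h3) \<Rightarrow> (case rv n 5 f3 (f1 @ c) of
                 Res e e' \<Rightarrow> e' = [] \<and> rv n 5 (h2 @ d) (h3 @ e) = Res [] [] | _ \<Rightarrow> False)"
    using ok assms rd by (simp add: cube_ok_def)
  then obtain f3 h3 where c3: "cmp n s r = Some (f3, h3)" and ok3: "case rv n 5 f3 (f1 @ c) of
                 Res e e' \<Rightarrow> e' = [] \<and> rv n 5 (h2 @ d) (h3 @ e) = Res [] [] | _ \<Rightarrow> False"
    by (auto split: option.splits)
  then obtain e where e1: "rv n 5 f3 (f1 @ c) = Res e []" and e2: "rv n 5 (h2 @ d) (h3 @ e) = Res [] []"
    by (auto split: res.splits)
  have s1: "sbeq n (f3 @ e) (f1 @ c)" using rv_sound[OF e1] by simp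
  have s2: "sbeq n (h2 @ d) (h3 @ e)" using rv_sound[OF e2] by simp
  show "\<exists>f3 h3 e. cmp n s r = Some (f3, h3) \<and> sbeq n (f1 @ c) (f3 @ e) \<and> sbeq n (h2 @ d) (h3 @ e)"
    using c3 sbeq.sym[OF s1] s2 by blast
qed

definition Pl :: "nat \<Rightarrow> nat \<Rightarrow> bool" where
  "Pl n m \<longleftrightarrow> (\<forall>s u t v. length u = m \<longrightarrow> sbeq n (s # u) (t # v) \<longrightarrow>
     (\<exists>f g z. cmp n s t = Some (f, g) \<and> sbeq n u (f @ z) \<and> sbeq n v (g @ z)))"

lemma rv_correct:
  "\<forall>m<L. Pl n m \<Longrightarrow> length (a @ X) \<le> L \<Longrightarrow> sbeq n (a @ X) (b @ Y) \<Longrightarrow>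
    (rv n k a b = Res c d \<longrightarrow> (\<exists>q. sbeq n X (c @ q) \<and> sbeq n Y (d @ q))) \<and> rv n k a b \<noteq> Clash"
proof (induction n k a b arbitrary: X Y c d rule: rv.induct)
  case (1 n k b)
  then show ?case by (auto intro: sbeq.refl)
next
  case (2 n k x a)
  have "sbeq n X X" "sbeq n Y (x # a @ X)" using sbeq.refl sbeq.sym[OF "2.prems"(3)] by auto
  then show ?case using "2.prems" by auto
next
  case (3 n x a y b)
  then show ?case by simp
next
  case (4 n k x a y b)
  note P = "4.prems"(1)
  have "length (a @ X) < L" using "4.prems"(2) by simp
  then have PP: "Pl n (length (a @ X))" using P by blast
  obtain f g z where fg: "cmp n x y = Some (f, g)" and e1: "sbeq n (a @ X) (f @ z)" and e2: "sbeq n (b @ Y) (g @ z)"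
    using PP[unfolded Pl_def, rule_format, OF HOL.refl, of x y "b @ Y"] "4.prems"(3) by auto
  have L1: "length (a @ X) \<le> L" using "4.prems"(2) by simp
  note IH1 = "4.IH"(1)[OF fg HOL.refl P L1 e1]
  show ?case
  proof (cases "rv n k a f")
    case (Res c1 d1)
    obtain q1 where q1: "sbeq n X (c1 @ q1)" "sbeq n z (d1 @ q1)" using IH1 Res by blast
    have e3: "sbeq n ((g @ d1) @ q1) (b @ Y)"
      using sbeq.trans[OF sbeq.sym[OF sbeq_appL[OF q1(2), of g]] sbeq.sym[OF e2]] by simp
    have L2: "length ((g @ d1) @ q1) \<le> L" using sbeq_length[OF e3] sbeq_length[OF "4.prems"(3)] "4.prems"(2) by simp
    note IH2 = "4.IH"(2)[OF fg HOL.refl Res P L2 e3]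
    show ?thesis
    proof (cases "rv n k (g @ d1) b")
      case (Res c2 d2)
      obtain q2 where q2: "sbeq n q1 (c2 @ q2)" "sbeq n Y (d2 @ q2)" using IH2 Res by blast
      have "sbeq n X (c1 @ c2 @ q2)" using sbeq.trans[OF q1(1) sbeq_appL[OF q2(1)]] .
      then show ?thesis using q2 fg \<open>rv n k a f = Res c1 d1\<close> Res by auto
    next
      case Clash then show ?thesis using IH2 by simp
    next
      case Out then show ?thesis using fg \<open>rv n k a f = Res c1 d1\<close> by simp
    qed
  next
    case Clash then show ?thesis using IH1 by simp
  next
    case Out then show ?thesis using fg by simp
  qed
qed

lemma cmp_refl: "cmp n s s = Some ([], [])"
  by (simp add: cmp_def)

lemma Pl_all: "Pl n L"
proof (induction L rule: less_induct)
  case (less L)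
  have PL: "\<forall>m<L. Pl n m" using less.IH by blast
  have main: "length W = Suc L \<longrightarrow> (\<forall>s u t v. W = s # u \<longrightarrow> W' = t # v \<longrightarrow>
      (\<exists>f g z. cmp n s t = Some (f, g) \<and> sbeq n u (f @ z) \<and> sbeq n v (g @ z)))"
    if "sbeq n W W'" for W W'
    using that
  proof (induction rule: sbeq.induct)
    case (refl w)
    show ?case
    proof (intro impI allI)
      fix s u t v assume "w = s # u" "w = t # v"
      then show "\<exists>f g z. cmp n s t = Some (f, g) \<and> sbeq n u (f @ z) \<and> sbeq n v (g @ z)"
        using cmp_refl[of n s] sbeq.refl[of n u] by auto
    qed
  next
    case (sym u0 v0)
    show ?case
    proof (intro impI allI)
      fix s u t v assume l: "length v0 = Suc L" and e: "v0 = s # u" "u0 = t # v"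
      have "length u0 = Suc L" using l sbeq_length[OF sym.hyps] by simp
      then obtain f g z where "cmp n t s = Some (f, g)" "sbeq n v (f @ z)" "sbeq n u (g @ z)"
        using sym.IH e by blast
      then show "\<exists>f g z. cmp n s t = Some (f, g) \<and> sbeq n u (f @ z) \<and> sbeq n v (g @ z)"
        using cmp_symD by blast
    qed
  next
    case (trans u0 v0 w0)
    show ?case
    proof (intro impI allI)
      fix s u r w assume l: "length u0 = Suc L" and e: "u0 = s # u" "w0 = r # w"
      have lv: "length v0 = Suc L" using l sbeq_length[OF trans.hyps(1)] by simp
      then obtain t v where ev: "v0 = t # v" by (cases v0) auto
      obtain f1 g1 z1 where c1: "cmp n s t = Some (f1, g1)" and u1: "sbeq n u (f1 @ z1)" and v1: "sbeq n v (g1 @ z1)"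
        using trans.IH(1) l e ev by blast
      obtain g2 h2 z2 where c2: "cmp n t r = Some (g2, h2)" and v2: "sbeq n v (g2 @ z2)" and w2: "sbeq n w (h2 @ z2)"
        using trans.IH(2) lv e ev by blast
      have gg: "sbeq n (g1 @ z1) (g2 @ z2)" using sbeq.trans[OF sbeq.sym[OF v1] v2] .
      have lg: "length (g1 @ z1) \<le> L" using sbeq_length[OF v1] lv ev by simp
      note rc = rv_correct[OF PL lg gg, of 5]
      obtain c d where rd: "rv n 5 g1 g2 = Res c d"
        using rc cube_use(1)[OF c1 c2] by (cases "rv n 5 g1 g2") auto
      obtain q where q: "sbeq n z1 (c @ q)" "sbeq n z2 (d @ q)" using rc rd by blast
      obtain f3 h3 e where c3: "cmp n s r = Some (f3, h3)" and e1: "sbeq n (f1 @ c) (f3 @ e)" and e2: "sbeq n (h2 @ d) (h3 @ e)"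
        using cube_use(2)[OF c1 c2 rd] by blast
      have "sbeq n u (f3 @ e @ q)"
        using sbeq.trans[OF u1 sbeq.trans[OF sbeq_appL[OF q(1)] sbeq_appR[OF e1, of q, simplified]]] by simp
      moreover have "sbeq n w (h3 @ e @ q)"
        using sbeq.trans[OF w2 sbeq.trans[OF sbeq_appL[OF q(2)] sbeq_appR[OF e2, of q, simplified]]] by simp
      ultimately show "\<exists>f g z. cmp n s r = Some (f, g) \<and> sbeq n u (f @ z) \<and> sbeq n w (g @ z)"
        using c3 by blast
    qed
  next
    case (step l r p q)
    show ?case
    proof (intro impI allI)
      fix s u t v assume e: "p @ l @ q = s # u" "p @ r @ q = t # v"
      show "\<exists>f g z. cmp n s t = Some (f, g) \<and> sbeq n u (f @ z) \<and> sbeq n v (g @ z)"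
      proof (cases p)
        case Nil
        have rc: "l \<noteq> []" "r \<noteq> []" "cmp n (hd l) (hd r) = Some (tl l, tl r)" using rels_cmp[OF step] by auto
        have "s = hd l" "u = tl l @ q" "t = hd r" "v = tl r @ q" using e Nil rc(1,2) by (cases l; cases r; auto)+
        then show ?thesis using rc(3) sbeq.refl by blast
      next
        case (Cons p0 p')
        have "s = p0" "t = p0" "u = p' @ l @ q" "v = p' @ r @ q" using e Cons by auto
        moreover have "sbeq n (p' @ l @ q) ([] @ p' @ r @ q)" using sbeq.step[OF step] by simp
        ultimately show ?thesis using cmp_refl[of n p0] sbeq.refl[of n v]
          by (intro exI[of _ "[]"] exI[of _ "[]"] exI[of _ v]) simp
      qed
    qed
  qed
  show ?case unfolding Pl_def
  proof (intro allI impI)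
    fix s u t v assume "length u = L" "sbeq n (s # u) (t # v)"
    then show "\<exists>f g z. cmp n s t = Some (f, g) \<and> sbeq n u (f @ z) \<and> sbeq n v (g @ z)"
      using main[of "s # u" "t # v"] by auto
  qed
qed

lemma braid_word_simps[simp]:
  "braid_word []" "braid_word (x # a) = ((\<exists>i. x = Sg i) \<and> braid_word a)"
  "braid_word (a @ b) = (braid_word a \<and> braid_word b)"
  by (auto simp: braid_word_def)

lemma cmp_braid: "cmp n (Sg i) (Sg j) = Some (f, g) \<Longrightarrow> braid_word f \<and> braid_word g"
  by (auto simp: cmp_def split: if_splits)

lemma grid:
  "length (a @ u) = L \<Longrightarrow> braid_word a \<Longrightarrow> braid_word b \<Longrightarrow> sbeq n (a @ u) (b @ v) \<Longrightarrow>
   \<exists>c d z. braid_word c \<and> braid_word d \<and> sbeq n (a @ c) (b @ d) \<and> sbeq n u (c @ z) \<and> sbeq n v (d @ z)"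
proof (induction L arbitrary: a b u v rule: less_induct)
  case (less L)
  show ?case
  proof (cases a)
    case Nil
    then show ?thesis using less.prems sbeq.refl[of n b] sbeq.refl[of n v]
      by (intro exI[of _ b] exI[of _ "[]"] exI[of _ v]) auto
  next
    case (Cons s a1)
    show ?thesis
    proof (cases b)
      case Nil
      then show ?thesis using less.prems sbeq.refl[of n a] sbeq.refl[of n u] sbeq.sym[OF less.prems(4)]
        by (intro exI[of _ "[]"] exI[of _ a] exI[of _ u]) auto
    next
      case (Cons t b1)
      obtain i where si: "s = Sg i" using less.prems(2) \<open>a = s # a1\<close> by auto
      obtain j where tj: "t = Sg j" using less.prems(3) Cons by auto
      have "Pl n (length (a1 @ u))" by (rule Pl_all)
      then obtain f g z where fg: "cmp n s t = Some (f, g)" and e1: "sbeq n (a1 @ u) (f @ z)" and e2: "sbeq n (b1 @ v) (g @ z)"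
        using \<open>Pl n (length (a1 @ u))\<close>[unfolded Pl_def, rule_format, OF HOL.refl, of s t "b1 @ v"]
          less.prems(4) \<open>a = s # a1\<close> Cons by auto
      have bf: "braid_word f" "braid_word g" using cmp_braid fg si tj by blast+
      have l1: "length (a1 @ u) < L" using less.prems(1) \<open>a = s # a1\<close> by simp
      obtain c1 d1 z1 where r1: "braid_word c1" "braid_word d1" "sbeq n (a1 @ c1) (f @ d1)" "sbeq n u (c1 @ z1)" "sbeq n z (d1 @ z1)"
        using less.IH[OF l1 HOL.refl _ bf(1) e1] less.prems(2) \<open>a = s # a1\<close> by auto
      have e3: "sbeq n ((g @ d1) @ z1) (b1 @ v)" using sbeq.trans[OF sbeq.sym[OF sbeq_appL[OF r1(5), of g]] sbeq.sym[OF e2]] by simp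
      have l2: "length ((g @ d1) @ z1) < L" using sbeq_length[OF e3] sbeq_length[OF less.prems(4)] less.prems(1) Cons by simp
      obtain c2 d2 z2 where r2: "braid_word c2" "braid_word d2" "sbeq n (g @ d1 @ c2) (b1 @ d2)" "sbeq n z1 (c2 @ z2)" "sbeq n v (d2 @ z2)"
        using less.IH[OF l2 HOL.refl _ _ e3] bf r1(2) less.prems(3) Cons by auto
      have A: "sbeq n (a @ c1 @ c2) (s # f @ d1 @ c2)"
        using \<open>a = s # a1\<close> sbeq_Cons[OF sbeq_appR[OF r1(3), of c2]] by simp
      have B: "sbeq n (s # f @ d1 @ c2) (t # g @ d1 @ c2)"
        using sbeq_appR[OF cmp_sound[OF fg], of "d1 @ c2"] by simp
      have C: "sbeq n (t # g @ d1 @ c2) (b @ d2)" using Cons sbeq_Cons[OF r2(3)] by simp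
      have "sbeq n (a @ c1 @ c2) (b @ d2)" using sbeq.trans[OF A sbeq.trans[OF B C]] .
      moreover have "sbeq n u ((c1 @ c2) @ z2)" using sbeq.trans[OF r1(4) sbeq_appL[OF r2(4)]] by simp
      ultimately show ?thesis using r1(1) r2(1,2,5)
        by (intro exI[of _ "c1 @ c2"] exI[of _ d2] exI[of _ z2]) auto
    qed
  qed
qed



section \<open>Reversal\<close>

lemma rels_rev: "(l, r) \<in> rels n \<Longrightarrow> (rev l, rev r) \<in> rels n \<or> (rev r, rev l) \<in> rels n"
  unfolding rels_def by auto

lemma sbeq_rev: "sbeq n u v \<Longrightarrow> sbeq n (rev u) (rev v)"
proof (induction rule: sbeq.induct)
  case (refl w) show ?case by (rule sbeq.refl)
next
  case (sym u v) show ?case by (rule sbeq.sym[OF sym.IH])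
next
  case (trans u v w) show ?case by (rule sbeq.trans[OF trans.IH])
next
  case (step l r u v)
  have a: "sbeq n (rev v @ rev l @ rev u) (rev v @ rev r @ rev u)"
    using rels_rev[OF step] sbeq.step[of "rev l" "rev r" n "rev v" "rev u"]
      sbeq.sym[OF sbeq.step[of "rev r" "rev l" n "rev v" "rev u"]] by blast
  then show ?case by simp
qed

lemma sbeq_rev_iff: "sbeq n (rev u) (rev v) = sbeq n u v"
  using sbeq_rev[of n "rev u" "rev v"] sbeq_rev[of n u v] by auto

lemma valid_rev[simp]: "valid n (rev a) = valid n a"
  by (simp add: valid_def)

lemma braid_rev[simp]: "braid_word (rev a) = braid_word a"
  by (simp add: braid_word_def)

lemma right_left: "greatest_right_braid_divisor n w d = greatest_left_braid_divisor n (rev w) (rev d)"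
proof -
  have A: "(\<exists>u. valid n u \<and> sbeq n w (u @ d)) = (\<exists>u. valid n u \<and> sbeq n (rev w) (rev d @ u))"
    by (metis rev_append rev_rev_ident sbeq_rev_iff valid_rev)
  have B: "(\<forall>a v. valid n a \<and> braid_word a \<and> valid n v \<and> sbeq n w (v @ a) \<longrightarrow> (\<exists>b. valid n b \<and> sbeq n d (b @ a)))
     = (\<forall>a v. valid n a \<and> braid_word a \<and> valid n v \<and> sbeq n (rev w) (a @ v) \<longrightarrow> (\<exists>b. valid n b \<and> sbeq n (rev d) (a @ b)))"
  proof
    assume h: "\<forall>a v. valid n a \<and> braid_word a \<and> valid n v \<and> sbeq n w (v @ a) \<longrightarrow> (\<exists>b. valid n b \<and> sbeq n d (b @ a))"
    show "\<forall>a v. valid n a \<and> braid_word a \<and> valid n v \<and> sbeq n (rev w) (a @ v) \<longrightarrow> (\<exists>b. valid n b \<and> sbeq n (rev d) (a @ b))"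
    proof (intro allI impI)
      fix a v assume "valid n a \<and> braid_word a \<and> valid n v \<and> sbeq n (rev w) (a @ v)"
      then have "valid n (rev a) \<and> braid_word (rev a) \<and> valid n (rev v) \<and> sbeq n w (rev v @ rev a)"
        by (metis braid_rev rev_append rev_rev_ident sbeq_rev_iff valid_rev)
      then obtain b where "valid n b" "sbeq n d (b @ rev a)" using h by blast
      then show "\<exists>b. valid n b \<and> sbeq n (rev d) (a @ b)"
        by (metis rev_append rev_rev_ident sbeq_rev_iff valid_rev)
    qed
  next
    assume h: "\<forall>a v. valid n a \<and> braid_word a \<and> valid n v \<and> sbeq n (rev w) (a @ v) \<longrightarrow> (\<exists>b. valid n b \<and> sbeq n (rev d) (a @ b))"
    show "\<forall>a v. valid n a \<and> braid_word a \<and> valid n v \<and> sbeq n w (v @ a) \<longrightarrow> (\<exists>b. valid n b \<and> sbeq n d (b @ a))"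
    proof (intro allI impI)
      fix a v assume "valid n a \<and> braid_word a \<and> valid n v \<and> sbeq n w (v @ a)"
      then have "valid n (rev a) \<and> braid_word (rev a) \<and> valid n (rev v) \<and> sbeq n (rev w) (rev a @ rev v)"
        by (metis braid_rev rev_append sbeq_rev_iff valid_rev)
      then obtain b where "valid n b" "sbeq n (rev d) (rev a @ b)" using h by blast
      then show "\<exists>b. valid n b \<and> sbeq n d (b @ a)"
        by (metis rev_append rev_rev_ident sbeq_rev_iff valid_rev)
    qed
  qed
  show ?thesis unfolding greatest_right_braid_divisor_def greatest_left_braid_divisor_def
    using A B by simp
qed

lemma left_exists:
  assumes vw: "valid n w"
  shows "\<exists>d. greatest_left_braid_divisor n w d"
proof -
  define D where "D = (\<lambda>a. valid n a \<and> braid_word a \<and> (\<exists>v. valid n v \<and> sbeq n w (a @ v)))"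
  have D0: "D []" unfolding D_def using vw sbeq.refl by (auto simp: valid_def)
  have Db: "\<forall>a. D a \<longrightarrow> length a < Suc (length w)"
    unfolding D_def using sbeq_length by fastforce
  obtain d where Dd: "D d" and dmax: "\<forall>a. D a \<longrightarrow> length a \<le> length d"
    using ex_has_greatest_nat[of D "[]" length "Suc (length w)"] D0 Db by blast
  then obtain u where vd: "valid n d" "braid_word d" and vu: "valid n u" and wd: "sbeq n w (d @ u)"
    unfolding D_def by blast
  have "\<exists>b. valid n b \<and> sbeq n d (a @ b)"
    if va: "valid n a" "braid_word a" "valid n v" "sbeq n w (a @ v)" for a v
  proof -
    have e: "sbeq n (d @ u) (a @ v)" using sbeq.trans[OF sbeq.sym[OF wd] va(4)] .
    obtain c c' z where g: "braid_word c" "braid_word c'" "sbeq n (d @ c) (a @ c')" "sbeq n u (c @ z)" "sbeq n v (c' @ z)"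
      using grid[OF HOL.refl vd(2) va(2) e] by blast
    have vcz: "valid n (c @ z)" using sbeq_valid[OF g(4)] vu by simp
    have "sbeq n w ((d @ c) @ z)" using sbeq.trans[OF wd sbeq_appL[OF g(4)]] by simp
    then have "D (d @ c)" unfolding D_def using vd g(1) vcz by auto
    then have "length (d @ c) \<le> length d" using dmax by blast
    then have "c = []" by simp
    then have dac: "sbeq n d (a @ c')" using g(3) by simp
    then have "valid n c'" using sbeq_valid[OF dac] vd by simp
    then show ?thesis using dac by blast
  qed
  then show ?thesis unfolding greatest_left_braid_divisor_def using vd vu wd by blast
qed

lemma left_unique:
  assumes "greatest_left_braid_divisor n w d" "greatest_left_braid_divisor n w d'"
  shows "sbeq n d d'"
proof -
  obtain u where u: "valid n u" "sbeq n w (d @ u)" using assms(1) unfolding greatest_left_braid_divisor_def by blast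
  obtain u' where u': "valid n u'" "sbeq n w (d' @ u')" using assms(2) unfolding greatest_left_braid_divisor_def by blast
  obtain b where b: "sbeq n d' (d @ b)" using assms unfolding greatest_left_braid_divisor_def using u by blast
  obtain b' where b': "sbeq n d (d' @ b')" using assms unfolding greatest_left_braid_divisor_def using u' by blast
  have "length b' = 0" using sbeq_length[OF b] sbeq_length[OF b'] by simp
  then show ?thesis using b' by simp
qed

theorem corollary2p2:
  fixes n :: nat and w :: "gen list"
  assumes "n \<ge> 2" and "valid n w"
  shows "(\<exists>d. greatest_left_braid_divisor n w d) \<and>
         (\<forall>d d'. greatest_left_braid_divisor n w d \<longrightarrow> greatest_left_braid_divisor n w d' \<longrightarrow> sbeq n d d') \<and>
         (\<exists>d. greatest_right_braid_divisor n w d) \<and>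
         (\<forall>d d'. greatest_right_braid_divisor n w d \<longrightarrow> greatest_right_braid_divisor n w d' \<longrightarrow> sbeq n d d')"
proof (intro conjI allI impI)
  show "\<exists>d. greatest_left_braid_divisor n w d" using left_exists[OF assms(2)] .
next
  fix d d' assume "greatest_left_braid_divisor n w d" "greatest_left_braid_divisor n w d'"
  then show "sbeq n d d'" by (rule left_unique)
next
  obtain d where "greatest_left_braid_divisor n (rev w) d" using left_exists[of n "rev w"] assms(2) by auto
  then have "greatest_right_braid_divisor n w (rev d)" using right_left by simp
  then show "\<exists>d. greatest_right_braid_divisor n w d" by blast
next
  fix d d' assume "greatest_right_braid_divisor n w d" "greatest_right_braid_divisor n w d'"
  then have "sbeq n (rev d) (rev d')" using left_unique right_left by blast
  then show "sbeq n d d'" using sbeq_rev_iff by blast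
qed

end
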